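(* Let $\mathbb{K}$ be any field and let $$\beta=[0;t,t^5,t^9,t^{13},\dots]\quad\text{and}\quad\gamma=[0;t^3,t^7,t^{11},t^{15},\dots],$$ i.e. $a_n(\beta)=t^{4n-3}$ and $a_n(\gamma)=t^{4n-1}$ for all $n\ge1$, and let $\alpha=\beta+\gamma$. Then the algorithm described in the context, applied to $\alpha$, never stops and produces $b_n=t^{4n-3}$ and $c_n=t^{4n-1}$ for all $n\ge1$; in particular it returns exactly $\beta$ and $\gamma$. (Hence the degree bounds $\deg c_1\ge 2\deg b_1+1$, $\deg b_n\ge\deg c_{n-1}+2$, $\deg c_n\ge\deg b_n+2$ satisfied by the algorithm's output are attained with equality.)
   Context: $\mathbb{K}((t^{-1}))$ is the field of formal Laurent series over a field $\mathbb{K}$. Every $\alpha$ has a unique continued fraction expansion $[a_0;a_1,\dots]$ with $a_n\in\mathbb{K}[t]$, $\deg a_n\ge1$ for $n\ge1$; $a_n(\alpha)$ denotes its $n$-th partial quotient. Algorithm: given $\alpha$ with $a_0(\alpha)=0$, for $n=0,1,2,\dots$, with $b_1,\dots,b_n,c_1,\dots,c_n$ defined: if $\alpha=[0;b_1,\dots,b_n]+[0;c_1,\dots,c_n]$, output $\beta=[0;b_1,\dots,b_n]$, $\gamma=[0;c_1,\dots,c_n]$ and stop. Otherwise set $b_{n+1}=a_{n+1}(\alpha-[0;c_1,\dots,c_n])$. If then $\alpha=[0;b_1,\dots,b_{n+1}]+[0;c_1,\dots,c_n]$, output $\beta=[0;b_1,\dots,b_{n+1}]$, $\gamma=[0;c_1,\dots,c_n]$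 and stop. Otherwise set $c_{n+1}=a_{n+1}(\alpha-[0;b_1,\dots,b_{n+1}])$ and continue. If it never stops, output $\beta=[0;b_1,b_2,\dots]$, $\gamma=[0;c_1,c_2,\dots]$. *)

theory Defs
  imports "HOL-Computational_Algebra.Formal_Laurent_Series"
begin

text \<open>We model K((t^-1)) as the type of formal Laurent series 'a fls in the variable
  X = t^-1 (finitely many negative powers of X = finitely many positive powers of t).
  Polynomials in t are 'a poly, embedded via t |-> fls_X_inv.\<close>

definition tpoly :: "'a::field poly \<Rightarrow> 'a fls" where
  "tpoly p = poly (map_poly fls_const p) fls_X_inv"

text \<open>Polynomial part (the partial quotient a_0): all terms t^k with k >= 0.\<close>
definition cf_floor :: "'a::field fls \<Rightarrow> 'a poly" where
  "cf_floor x = fls_prpart x + [: fls_nth x 0 :]"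

definition cf_frac :: "'a::field fls \<Rightarrow> 'a fls" where
  "cf_frac x = x - tpoly (cf_floor x)"

text \<open>Complete quotients alpha_n; if the expansion terminates they become 0
  (inverse 0 = 0), and then the corresponding partial quotients are 0.\<close>
fun cf_rem :: "'a::field fls \<Rightarrow> nat \<Rightarrow> 'a fls" where
  "cf_rem x 0 = x"
| "cf_rem x (Suc n) = inverse (cf_frac (cf_rem x n))"

definition pq :: "'a::field fls \<Rightarrow> nat \<Rightarrow> 'a poly" where
  "pq x n = cf_floor (cf_rem x n)"

fun fcf :: "'a::field poly list \<Rightarrow> 'a fls" where
  "fcf [] = 0"
| "fcf (a # as) = inverse (tpoly a + fcf as)"

declare [[typedef_overloaded]]
datatype 'a alg_state = Running "'a poly list" "'a poly list" | Stopped "'a fls" "'a fls"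

text \<open>State of the algorithm after n rounds: Running [b_1..b_n] [c_1..c_n], or
  Stopped beta gamma if it has stopped with that output.\<close>
fun cf_alg :: "'a::field fls \<Rightarrow> nat \<Rightarrow> 'a alg_state" where
  "cf_alg x 0 = Running [] []"
| "cf_alg x (Suc n) =
     (case cf_alg x n of
        Stopped u v \<Rightarrow> Stopped u v
      | Running bs cs \<Rightarrow>
          (if x = fcf bs + fcf cs then Stopped (fcf bs) (fcf cs)
           else (let bs' = bs @ [pq (x - fcf cs) (Suc n)] in
                 if x = fcf bs' + fcf cs then Stopped (fcf bs') (fcf cs)
                 else Running bs' (cs @ [pq (x - fcf bs') (Suc n)]))))"

end

theory Submission imports Defs begin
unbundle fps_syntax

lemma tpoly_pCons: "tpoly (pCons a p) = fls_const a + fls_X_inv * tpoly (p::'a::field poly)"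
  by (simp add: tpoly_def map_poly_pCons)

lemma tpoly_nth: "(tpoly (p::'a::field poly)) $$ n = (if n \<le> 0 then coeff p (nat (-n)) else 0)"
proof (induction p arbitrary: n)
  case 0
  then show ?case by (simp add: tpoly_def)
next
  case (pCons a p)
  show ?case
    by (auto simp: tpoly_pCons fls_X_inv_times_conv_shift pCons.IH coeff_pCons
        split: nat.split) (auto simp: nat_diff_distrib' ) 
qed

lemma coeff_cf_floor: "coeff (cf_floor x) i = x $$ (- int i)"
  by (cases i) (auto simp: cf_floor_def)

lemma cf_frac_nth: "cf_frac x $$ n = (if n \<le> 0 then 0 else x $$ n)"
  by (simp add: cf_frac_def tpoly_nth coeff_cf_floor)

lemma cf_floor_eqI: "(\<And>n. n \<le> 0 \<Longrightarrow> x $$ n = y $$ n) \<Longrightarrow> cf_floor x = cf_floor y"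
  by (rule poly_eqI) (simp add: coeff_cf_floor)

lemma cf_floor_cf_frac: "cf_floor (cf_frac x) = 0"
  by (rule poly_eqI) (simp add: coeff_cf_floor cf_frac_nth)

lemma cf_floor_tpoly: "cf_floor (tpoly p) = p"
  by (rule poly_eqI) (simp add: coeff_cf_floor tpoly_nth)

lemma cf_frac_pos: "cf_frac x = 0 \<or> fls_subdegree (cf_frac x) > 0"
proof (cases "cf_frac x = 0")
  case False
  then have "cf_frac x $$ fls_subdegree (cf_frac x) \<noteq> 0" by simp
  then show ?thesis by (auto simp: cf_frac_nth split: if_splits)
qed simp

lemma cf_frac_id: "cf_floor x = 0 \<Longrightarrow> cf_frac x = x"
  by (simp add: cf_frac_def tpoly_def)

lemma floor_deg: assumes "degree (cf_floor z) \<ge> 1"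
  shows "z \<noteq> 0 \<and> fls_subdegree z = - int (degree (cf_floor z))"
proof -
  let ?d = "degree (cf_floor z)"
  have nz: "cf_floor z \<noteq> 0" using assms by auto
  have "coeff (cf_floor z) ?d \<noteq> 0" using nz by simp
  then have a: "z $$ (- int ?d) \<noteq> 0" by (simp add: coeff_cf_floor)
  have b: "z $$ k = 0" if "k < - int ?d" for k
  proof -
    have "coeff (cf_floor z) (nat (-k)) = 0" using that by (intro coeff_eq_0) linarith
    with that show ?thesis by (simp add: coeff_cf_floor)
  qed
  from a have "z \<noteq> 0" by auto
  moreover have "fls_subdegree z = - int ?d" using a b by (rule fls_subdegree_eqI)
  ultimately show ?thesis by simp
qed

lemma floor_small: assumes "g = 0 \<or> fls_subdegree g > 0" shows "cf_floor (x + g) = cf_floor x"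
  by (rule cf_floor_eqI) (use assms in auto)

lemma tpoly_plus_small:
  assumes "degree a \<ge> 1" "g = 0 \<or> fls_subdegree g > 0"
  shows "tpoly a + g \<noteq> 0 \<and> fls_subdegree (tpoly a + g) = - int (degree a)"
  using floor_deg[of "tpoly a + g"] assms by (simp add: floor_small cf_floor_tpoly)

lemma cf_rem_shift: "cf_rem x (Suc n) = cf_rem (inverse (cf_frac x)) n"
  by (induction n) auto


lemma inv_diff: "(a::'a::field fls) \<noteq> 0 \<Longrightarrow> b \<noteq> 0 \<Longrightarrow> inverse a - inverse b = (b - a) * inverse a * inverse b"
  by (simp add: field_simps)

lemma pq_0: "pq x 0 = cf_floor x" by (simp add: pq_def)
lemma pq_Suc: "pq x (Suc i) = pq (inverse (cf_frac x)) i" by (simp only: pq_def cf_rem_shift)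

lemma same_pq:
  "(\<forall>j\<in>{1..k}. degree (pq x j) \<ge> 1) \<Longrightarrow> y \<noteq> x \<Longrightarrow>
   fls_subdegree (y - x) > 2 * (\<Sum>j<k. int (degree (pq x (Suc j)))) \<Longrightarrow> j \<le> k \<Longrightarrow> pq y j = pq x j"
proof (induction k arbitrary: x y j)
  case 0
  then have "cf_floor (x + (y - x)) = cf_floor x" by (intro floor_small) auto
  with 0 show ?case by (simp add: pq_0)
next
  case (Suc k)
  have S0: "(\<Sum>j<k. int (degree (pq x (Suc (Suc j))))) \<ge> 0" by (intro sum_nonneg) auto
  have sumeq: "(\<Sum>j<Suc k. int (degree (pq x (Suc j)))) = int (degree (pq x 1)) + (\<Sum>j<k. int (degree (pq x (Suc (Suc j)))))"
    by (subst sum.lessThan_Suc_shift) simp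
  have fl: "cf_floor y = cf_floor x"
  proof -
    have "cf_floor (x + (y - x)) = cf_floor x" using Suc.prems(3) S0 sumeq by (intro floor_small) auto
    then show ?thesis by simp
  qed
  show ?case
  proof (cases j)
    case 0 then show ?thesis using fl by (simp add: pq_0)
  next
    case (Suc j')
    define fx where "fx = cf_frac x"
    define fy where "fy = cf_frac y"
    define x1 where "x1 = inverse fx"
    define y1 where "y1 = inverse fy"
    define a where "a = degree (pq x 1)"
    have a1: "a \<ge> 1" using Suc.prems(1) by (auto simp: a_def)
    have "degree (cf_floor x1) = a" by (simp add: a_def x1_def fx_def pq_Suc pq_0)
    with floor_deg[of x1] a1 have x1: "x1 \<noteq> 0" "fls_subdegree x1 = - int a" by auto
    have fx: "fx \<noteq> 0" "fls_subdegree fx = int a" using x1 by (auto simp: x1_def)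
    have d: "fy - fx = y - x" by (simp add: fx_def fy_def cf_frac_def fl)
    have vd: "fls_subdegree (y - x) > 2 * int a + 2 * (\<Sum>j<k. int (degree (pq x (Suc (Suc j)))))"
      using Suc.prems(3) sumeq by (simp add: a_def)
    have "fy = fx + (y - x)" using d by (simp add: algebra_simps)
    moreover have "fls_subdegree (fx + (y - x)) = fls_subdegree fx"
      using fx vd S0 by (intro fls_subdegree_add_eq1) auto
    ultimately have fy: "fls_subdegree fy = int a" "fy \<noteq> 0" using fx a1 by auto
    have y1: "y1 - x1 = (fx - fy) * inverse fy * inverse fx"
      unfolding x1_def y1_def by (rule inv_diff) (use fx fy in auto)
    have nz: "fx - fy \<noteq> 0" using Suc.prems(2) d by auto
    have fxy: "fls_subdegree (fx - fy) = fls_subdegree (y - x)"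
      using d fls_subdegree_minus_sym[of fx fy] by simp
    have i1: "inverse fy \<noteq> 0" "inverse fx \<noteq> 0" using fx fy by auto
    have p1: "(fx - fy) * inverse fy \<noteq> 0" using nz i1 by simp
    have p2: "(fx - fy) * inverse fy * inverse fx \<noteq> 0" using p1 i1 by simp
    have ne: "y1 \<noteq> x1" using y1 p2 by auto
    have v1: "fls_subdegree (y1 - x1) = fls_subdegree (y - x) - 2 * int a"
      unfolding y1 using fls_subdegree_mult[OF p1 i1(2)] fls_subdegree_mult[OF nz i1(1)] fxy fx fy by simp
    have px: "pq x (Suc i) = pq x1 i" for i by (simp add: pq_Suc x1_def fx_def)
    have py: "pq y (Suc i) = pq y1 i" for i by (simp add: pq_Suc y1_def fy_def)
    have "pq y1 j' = pq x1 j'"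
    proof (rule Suc.IH)
      show "\<forall>j\<in>{1..k}. 1 \<le> degree (pq x1 j)"
      proof
        fix j assume "j \<in> {1..k}"
        then have "Suc j \<in> {1..Suc k}" by auto
        then show "1 \<le> degree (pq x1 j)" using Suc.prems(1) px by metis
      qed
      show "y1 \<noteq> x1" by (rule ne)
      show "2 * (\<Sum>j<k. int (degree (pq x1 (Suc j)))) < fls_subdegree (y1 - x1)"
        using v1 vd by (simp add: px[symmetric])
      show "j' \<le> k" using Suc.prems(4) \<open>j = Suc j'\<close> by simp
    qed
    then show ?thesis using \<open>j = Suc j'\<close> px py by simp
  qed
qed


lemma fcf_small: "(\<forall>a\<in>set as. degree a \<ge> 1) \<Longrightarrow> fcf as = 0 \<or> fls_subdegree (fcf as) > 0"
proof (induction as)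
  case (Cons a as)
  then have "tpoly a + fcf as \<noteq> 0 \<and> fls_subdegree (tpoly a + fcf as) = - int (degree a)"
    by (intro tpoly_plus_small) auto
  then show ?case using Cons.prems by auto
qed simp

lemma conv_err:
  "pq x 0 = 0 \<Longrightarrow> (\<forall>j\<in>{1..Suc k}. degree (pq x j) \<ge> 1) \<Longrightarrow>
   x - fcf (map (pq x) [1..<Suc k]) \<noteq> 0 \<and>
   fls_subdegree (x - fcf (map (pq x) [1..<Suc k])) =
     (\<Sum>j<k. int (degree (pq x (Suc j)))) + (\<Sum>j<Suc k. int (degree (pq x (Suc j))))"
proof (induction k arbitrary: x)
  case 0
  have fl: "cf_floor x = 0" using 0 by (simp add: pq_0)
  have "degree (cf_floor (inverse x)) \<ge> 1" using 0(2) by (simp add: pq_Suc pq_0 cf_frac_id[OF fl])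
  from floor_deg[OF this] have "x \<noteq> 0" "fls_subdegree x = int (degree (pq x 1))"
    by (auto simp: pq_Suc pq_0 cf_frac_id[OF fl])
  then show ?case by simp
next
  case (Suc k)
  have fl: "cf_floor x = 0" using Suc by (simp add: pq_0)
  define x1 where "x1 = inverse x"
  define x' where "x' = cf_frac x1"
  define a where "a = degree (pq x 1)"
  have px: "pq x (Suc i) = pq x1 i" for i by (simp add: pq_Suc x1_def cf_frac_id[OF fl])
  have a1: "a \<ge> 1" using Suc.prems(2) by (auto simp: a_def)
  have "degree (cf_floor x1) = a" using px[of 0] by (simp add: a_def pq_0)
  with floor_deg[of x1] a1 have x1: "x1 \<noteq> 0" "fls_subdegree x1 = - int a" by auto
  have flx': "cf_floor x' = 0" by (simp add: x'_def cf_floor_cf_frac)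
  have px': "pq x' (Suc i) = pq x (Suc (Suc i))" for i
  proof -
    have "pq x' (Suc i) = pq (inverse x') i" by (simp only: pq_Suc cf_frac_id[OF flx'])
    moreover have "pq x (Suc (Suc i)) = pq (inverse x') i" 
      unfolding x'_def using px[of "Suc i"] pq_Suc[of x1 i] by (rule trans)
    ultimately show ?thesis by simp
  qed
  have x1eq: "x1 = tpoly (pq x 1) + x'" by (simp add: x'_def cf_frac_def px pq_0)
  have IH: "x' - fcf (map (pq x') [1..<Suc k]) \<noteq> 0 \<and>
   fls_subdegree (x' - fcf (map (pq x') [1..<Suc k])) =
     (\<Sum>j<k. int (degree (pq x' (Suc j)))) + (\<Sum>j<Suc k. int (degree (pq x' (Suc j))))"
  proof (rule Suc.IH)
    show "pq x' 0 = 0" using flx' by (simp add: pq_0)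
    show "\<forall>j\<in>{1..Suc k}. 1 \<le> degree (pq x' j)"
    proof
      fix j assume j: "j \<in> {1..Suc k}"
      then obtain i where "j = Suc i" by (cases j) auto
      with j Suc.prems(2) px' show "1 \<le> degree (pq x' j)" by auto
    qed
  qed
  define f where "f = fcf (map (pq x') [1..<Suc k])"
  have lst: "map (pq x) [1..<Suc (Suc k)] = pq x 1 # map (pq x') [1..<Suc k]"
  proof -
    have "[1..<Suc (Suc k)] = 1 # map Suc [1..<Suc k]"
      by (simp add: upt_conv_Cons map_Suc_upt)
    moreover have "map (pq x) (map Suc [1..<Suc k]) = map (pq x') [1..<Suc k]"
      unfolding map_map
    proof (rule map_cong[OF refl])
      fix i assume "i \<in> set [1..<Suc k]"
      then have "i \<ge> 1" by (simp del: upt_Suc)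
      then obtain i' where "i = Suc i'" by (cases i) auto
      then show "(pq x \<circ> Suc) i = pq x' i" by (simp add: px')
    qed
    ultimately show ?thesis by simp
  qed
  have fsmall: "f = 0 \<or> fls_subdegree f > 0"
    unfolding f_def
  proof (rule fcf_small)
    show "\<forall>b\<in>set (map (pq x') [1..<Suc k]). 1 \<le> degree b"
    proof
      fix b assume "b \<in> set (map (pq x') [1..<Suc k])"
      then obtain j where j0: "j \<in> set [1..<Suc k]" "b = pq x' j" by (auto simp del: upt_Suc)
      then have j: "1 \<le> j" "j \<le> k" by auto
      then obtain i where "j = Suc i" by (cases j) auto
      with j j0 Suc.prems(2) px' show "1 \<le> degree b" by auto
    qed
  qed
  define D where "D = tpoly (pq x 1) + f"
  have D: "D \<noteq> 0" "fls_subdegree D = - int a"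
    using tpoly_plus_small[OF _ fsmall, of "pq x 1"] a1 by (auto simp: D_def a_def)
  have e: "x - fcf (map (pq x) [1..<Suc (Suc k)]) = (D - x1) * inverse x1 * inverse D"
  proof -
    have "fcf (map (pq x) [1..<Suc (Suc k)]) = inverse D" unfolding lst D_def f_def by simp
    moreover have "x = inverse x1" by (simp add: x1_def)
    ultimately show ?thesis using inv_diff[OF x1(1) D(1)] by simp
  qed
  have Dx: "D - x1 = - (x' - f)" by (simp add: D_def x1eq)
  have nz: "D - x1 \<noteq> 0" using IH Dx f_def by auto
  have vD: "fls_subdegree (D - x1) = fls_subdegree (x' - f)" using Dx fls_subdegree_minus_sym[of f x'] by simp
  have i1: "inverse x1 \<noteq> 0" "inverse D \<noteq> 0" using x1 D by auto
  have p1: "(D - x1) * inverse x1 \<noteq> 0" using nz i1 by simp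
  have p2: "(D - x1) * inverse x1 * inverse D \<noteq> 0" using p1 i1 by simp
  have v: "fls_subdegree (x - fcf (map (pq x) [1..<Suc (Suc k)])) = fls_subdegree (x' - f) + 2 * int a"
    unfolding e using fls_subdegree_mult[OF p1 i1(2)] fls_subdegree_mult[OF nz i1(1)] vD x1 D by simp
  have s1: "(\<Sum>j<Suc k. int (degree (pq x (Suc j)))) = int a + (\<Sum>j<k. int (degree (pq x' (Suc j))))"
    by (subst sum.lessThan_Suc_shift) (simp add: a_def px')
  have s2: "(\<Sum>j<Suc (Suc k). int (degree (pq x (Suc j)))) = int a + (\<Sum>j<Suc k. int (degree (pq x' (Suc j))))"
    by (subst sum.lessThan_Suc_shift) (simp add: a_def px')
  show ?case using v s1 s2 IH p2 e by (simp add: f_def)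
qed


lemma sum_b: "(\<Sum>j<k. int (4 * Suc j - 3)) = 2 * int k ^ 2 - int k"
  by (induction k) (auto simp: power2_eq_square algebra_simps)

lemma sum_c: "(\<Sum>j<k. int (4 * Suc j - 1)) = 2 * int k ^ 2 + int k"
  by (induction k) (auto simp: power2_eq_square algebra_simps)

lemma deg_X: "degree ([:0, 1:] ^ m :: 'a::field poly) = m"
  by (simp add: degree_power_eq)

theorem proposition4p4:
  fixes \<beta> \<gamma> \<alpha> :: "'a::field fls"
  assumes "pq \<beta> 0 = 0" and "\<forall>n\<ge>1. pq \<beta> n = [:0, 1:] ^ (4 * n - 3)"
      and "pq \<gamma> 0 = 0" and "\<forall>n\<ge>1. pq \<gamma> n = [:0, 1:] ^ (4 * n - 1)"
      and "\<alpha> = \<beta> + \<gamma>"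
  shows "\<forall>n. cf_alg \<alpha> n =
           Running (map (\<lambda>k. [:0, 1:] ^ (4 * k - 3)) [1..<n + 1])
                   (map (\<lambda>k. [:0, 1:] ^ (4 * k - 1)) [1..<n + 1])"
proof -
  note b0 = assms(1) and bS = assms(2) and c0 = assms(3) and cS = assms(4) and al = assms(5)
  define Bs :: "nat \<Rightarrow> 'a poly list" where "Bs n = map (\<lambda>k. [:0, 1:] ^ (4 * k - 3)) [1..<n + 1]" for n :: nat
  define Cs :: "nat \<Rightarrow> 'a poly list" where "Cs n = map (\<lambda>k. [:0, 1:] ^ (4 * k - 1)) [1..<n + 1]" for n :: nat
  have dB: "degree (pq \<beta> (Suc j)) = 4 * Suc j - 3" for j using bS by (simp add: deg_X)
  have dC: "degree (pq \<gamma> (Suc j)) = 4 * Suc j - 1" for j using cS by (simp add: deg_X)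
  have sB: "(\<Sum>j<k. int (degree (pq \<beta> (Suc j)))) = 2 * int k ^ 2 - int k" for k
    by (simp only: dB sum_b)
  have sC: "(\<Sum>j<k. int (degree (pq \<gamma> (Suc j)))) = 2 * int k ^ 2 + int k" for k
    by (simp only: dC sum_c)
  have BsE: "Bs n = map (pq \<beta>) [1..<Suc n]" for n
    unfolding Bs_def by (rule map_cong) (use bS in \<open>auto simp del: upt_Suc\<close>)
  have CsE: "Cs n = map (pq \<gamma>) [1..<Suc n]" for n
    unfolding Cs_def by (rule map_cong) (use cS in \<open>auto simp del: upt_Suc\<close>)
  have degB: "\<forall>j\<in>{1..Suc k}. degree (pq \<beta> j) \<ge> 1" for k
    using bS by (auto simp: deg_X)
  have degC: "\<forall>j\<in>{1..Suc k}. degree (pq \<gamma> j) \<ge> 1" for k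
    using cS by (auto simp: deg_X)
  have EB: "\<beta> - fcf (Bs n) \<noteq> 0 \<and> fls_subdegree (\<beta> - fcf (Bs n)) = 4 * int n ^ 2 + 2 * int n + 1" for n
    using conv_err[OF b0 degB[of n]] unfolding BsE sB by (simp add: power2_eq_square algebra_simps)
  have EC: "\<gamma> - fcf (Cs n) \<noteq> 0 \<and> fls_subdegree (\<gamma> - fcf (Cs n)) = 4 * int n ^ 2 + 6 * int n + 3" for n
    using conv_err[OF c0 degC[of n]] unfolding CsE sC by (simp add: power2_eq_square algebra_simps)
  have BsS: "Bs (Suc n) = Bs n @ [pq \<beta> (Suc n)]" for n by (simp add: BsE)
  have CsS: "Cs (Suc n) = Cs n @ [pq \<gamma> (Suc n)]" for n by (simp add: CsE)
  have ne: "\<alpha> \<noteq> fcf (Bs m) + fcf (Cs n)" if "4 * int m ^ 2 + 2 * int m + 1 \<noteq> 4 * int n ^ 2 + 6 * int n + 3" for m n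
  proof
    assume "\<alpha> = fcf (Bs m) + fcf (Cs n)"
    then have "\<beta> - fcf (Bs m) = - (\<gamma> - fcf (Cs n))" using al by (simp add: algebra_simps)
    then have "fls_subdegree (\<beta> - fcf (Bs m)) = fls_subdegree (\<gamma> - fcf (Cs n))"
      using fls_subdegree_minus_sym[of "fcf (Cs n)" \<gamma>] by simp
    with EB[of m] EC[of n] that show False by simp
  qed
  have step_b: "pq (\<alpha> - fcf (Cs n)) (Suc n) = pq \<beta> (Suc n)" for n
  proof (rule same_pq[OF degB[of n]])
    have "\<alpha> - fcf (Cs n) - \<beta> = \<gamma> - fcf (Cs n)" using al by simp
    then show "\<alpha> - fcf (Cs n) \<noteq> \<beta>" and
      "2 * (\<Sum>j<Suc n. int (degree (pq \<beta> (Suc j)))) < fls_subdegree (\<alpha> - fcf (Cs n) - \<beta>)"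
      using EC[of n] unfolding sB by (auto simp: power2_eq_square algebra_simps)
  qed simp
  have step_c: "pq (\<alpha> - fcf (Bs (Suc n))) (Suc n) = pq \<gamma> (Suc n)" for n
  proof (rule same_pq[OF degC[of n]])
    have "\<alpha> - fcf (Bs (Suc n)) - \<gamma> = \<beta> - fcf (Bs (Suc n))" using al by simp
    then show "\<alpha> - fcf (Bs (Suc n)) \<noteq> \<gamma>" and
      "2 * (\<Sum>j<Suc n. int (degree (pq \<gamma> (Suc j)))) < fls_subdegree (\<alpha> - fcf (Bs (Suc n)) - \<gamma>)"
      using EB[of "Suc n"] unfolding sC by (auto simp: power2_eq_square algebra_simps)
  qed simp
  have "cf_alg \<alpha> n = Running (Bs n) (Cs n)" for n
  proof (induction n)
    case 0
    then show ?case by (simp add: Bs_def Cs_def)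
  next
    case (Suc n)
    have n1: "\<alpha> \<noteq> fcf (Bs n) + fcf (Cs n)" by (rule ne) (simp add: algebra_simps)
    have n2: "\<alpha> \<noteq> fcf (Bs (Suc n)) + fcf (Cs n)" by (rule ne) (simp add: algebra_simps power2_eq_square)
    show ?case using Suc.IH n1 n2 step_b[of n] step_c[of n]
      by (simp add: Let_def BsS CsS)
  qed
  then show ?thesis by (simp add: Bs_def Cs_def)
qed

end
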